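(* Let $G$ be a Feynman diagram and $A_G$ the support of $\mathcal{F}_{z,m}$ for generic $(z,m)\in\mathbb{R}^K\times\mathbb{R}^{\mathcal{E}}$. Then $\mathcal{K}_G\cap\operatorname{int}\mathcal{C}_{A_G}\neq\emptyset$ if and only if $\mathcal{K}_G$ contains a polynomial in which every monomial $x^a$, $a\in A_G$, has strictly positive coefficient.
   Context: $G$ is a connected graph with internal edges $1,\dots,n$ (variables $x_1,\dots,x_n$); $\mathcal{T}$ = spanning trees (as subsets of $[n]$), $\mathcal{W}$ = spanning 2-forests $\{T_1,T_2\}$; $\mathcal{U}(x)=\sum_{T\in\mathcal{T}}\prod_{e\notin T}x_e$. For a linear map $L:\mathbb{R}^K\to\mathbb{R}^{\mathcal{W}}$ and $\mathcal{E}\subseteq[n]$, $\mathcal{F}_{z,m}(x)=\sum_{\{T_1,T_2\}\in\mathcal{W}}L_{T_1,T_2}(z)\prod_{e\notin T_1\sqcup T_2}x_e+\big(\sum_{e\in\mathcal{E}}m_ex_e\big)\mathcal{U}(x)$. The kinematic space is $\mathcal{K}_G=\{\mathcal{F}_{z,m}:(z,m)\in\mathbb{R}^K\times\mathbb{R}^{\mathcal{E}}\}\subseteq\mathbb{R}[x]_{A_G}$, where $\mathbb{R}[x]_{A_G}$ is the space of polynomials with support in $A_G$. $\mathcal{C}_{A_G}=\{g\in\mathbb{R}[x]_{A_G}:g\ge0\text{ on }\mathbb{R}^n_{>0}\}$ and $\operatorname{int}$ is the interior in $\mathbb{R}[x]_{A_G}$. *)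

theory Defs
  imports "HOL-Analysis.Analysis" "HOL-Library.Poly_Mapping"
begin

text \<open>Graphs: vertex set V, internal edges 0..<n (edge e corresponds to x_(e+1)),
  edge e has endpoints ends e (multi-edges and self-loops allowed).\<close>

definition conn :: "(nat \<Rightarrow> 'v \<times> 'v) \<Rightarrow> nat set \<Rightarrow> 'v \<Rightarrow> 'v \<Rightarrow> bool" where
  "conn ends S = (\<lambda>a b. \<exists>e\<in>S. ends e = (a, b) \<or> ends e = (b, a))\<^sup>*\<^sup>*"

definition is_forest :: "(nat \<Rightarrow> 'v \<times> 'v) \<Rightarrow> nat \<Rightarrow> nat set \<Rightarrow> bool" where
  "is_forest ends n F \<longleftrightarrow> F \<subseteq> {0..<n} \<and>
     (\<forall>e\<in>F. \<not> conn ends (F - {e}) (fst (ends e)) (snd (ends e)))"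

definition conn_rel :: "'v set \<Rightarrow> (nat \<Rightarrow> 'v \<times> 'v) \<Rightarrow> nat set \<Rightarrow> ('v \<times> 'v) set" where
  "conn_rel V ends S = {(u, v). u \<in> V \<and> v \<in> V \<and> conn ends S u v}"

definition connected_graph :: "'v set \<Rightarrow> (nat \<Rightarrow> 'v \<times> 'v) \<Rightarrow> nat \<Rightarrow> bool" where
  "connected_graph V ends n \<longleftrightarrow> finite V \<and> V \<noteq> {} \<and>
     (\<forall>e<n. fst (ends e) \<in> V \<and> snd (ends e) \<in> V) \<and>
     (\<forall>u\<in>V. \<forall>v\<in>V. conn ends {0..<n} u v)"

definition spanning_trees :: "'v set \<Rightarrow> (nat \<Rightarrow> 'v \<times> 'v) \<Rightarrow> nat \<Rightarrow> nat set set" where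
  "spanning_trees V ends n = {T. is_forest ends n T \<and> (\<forall>u\<in>V. \<forall>v\<in>V. conn ends T u v)}"

text \<open>Spanning 2-forests {T1,T2}, represented by their edge set T1 \<union> T2
  (which determines the unordered pair of trees as its two components).\<close>
definition spanning_2forests :: "'v set \<Rightarrow> (nat \<Rightarrow> 'v \<times> 'v) \<Rightarrow> nat \<Rightarrow> nat set set" where
  "spanning_2forests V ends n = {F. is_forest ends n F \<and> card (V // conn_rel V ends F) = 2}"

type_synonym rpoly = "(nat \<Rightarrow>\<^sub>0 nat) \<Rightarrow>\<^sub>0 real"

definition peval :: "rpoly \<Rightarrow> (nat \<Rightarrow> real) \<Rightarrow> real" where
  "peval p x = (\<Sum>a\<in>Poly_Mapping.keys p. Poly_Mapping.lookup p a * (\<Prod>i\<in>Poly_Mapping.keys a. x i ^ Poly_Mapping.lookup a i))"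

definition expo :: "nat \<Rightarrow> nat set \<Rightarrow> (nat \<Rightarrow>\<^sub>0 nat)" where
  "expo n S = (\<Sum>e\<in>{0..<n} - S. Poly_Mapping.single e 1)"

definition symanzik_U :: "'v set \<Rightarrow> (nat \<Rightarrow> 'v \<times> 'v) \<Rightarrow> nat \<Rightarrow> rpoly" where
  "symanzik_U V ends n = (\<Sum>T\<in>spanning_trees V ends n. Poly_Mapping.single (expo n T) 1)"

definition symanzik_F ::
  "'v set \<Rightarrow> (nat \<Rightarrow> 'v \<times> 'v) \<Rightarrow> nat \<Rightarrow> (nat set \<Rightarrow> real^'k \<Rightarrow> real) \<Rightarrow> nat set
   \<Rightarrow> real^'k \<Rightarrow> (nat \<Rightarrow> real) \<Rightarrow> rpoly" where
  "symanzik_F V ends n L E z m =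
     (\<Sum>F\<in>spanning_2forests V ends n. Poly_Mapping.single (expo n F) (L F z))
     + (\<Sum>e\<in>E. Poly_Mapping.single (Poly_Mapping.single e 1) (m e)) * symanzik_U V ends n"

definition kinematic_space ::
  "'v set \<Rightarrow> (nat \<Rightarrow> 'v \<times> 'v) \<Rightarrow> nat \<Rightarrow> (nat set \<Rightarrow> real^'k \<Rightarrow> real) \<Rightarrow> nat set \<Rightarrow> rpoly set" where
  "kinematic_space V ends n L E =
     {symanzik_F V ends n L E z m | (z :: real^'k) m. True}"

text \<open>Generic support A_G: the union of the supports of all F_{z,m}
  (coefficients depend linearly on (z,m), so this is the support for generic parameters).\<close>
definition generic_support ::
  "'v set \<Rightarrow> (nat \<Rightarrow> 'v \<times> 'v) \<Rightarrow> nat \<Rightarrow> (nat set \<Rightarrow> real^'k \<Rightarrow> real) \<Rightarrow> nat set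
   \<Rightarrow> (nat \<Rightarrow>\<^sub>0 nat) set" where
  "generic_support V ends n L E = \<Union> (Poly_Mapping.keys ` kinematic_space V ends n L E)"

definition poly_space :: "(nat \<Rightarrow>\<^sub>0 nat) set \<Rightarrow> rpoly set" where
  "poly_space A = {g. Poly_Mapping.keys g \<subseteq> A}"

definition nonneg_cone :: "nat \<Rightarrow> (nat \<Rightarrow>\<^sub>0 nat) set \<Rightarrow> rpoly set" where
  "nonneg_cone n A = {g \<in> poly_space A. \<forall>x. (\<forall>i<n. x i > 0) \<longrightarrow> peval g x \<ge> 0}"

definition interior_in :: "(nat \<Rightarrow>\<^sub>0 nat) set \<Rightarrow> rpoly set \<Rightarrow> rpoly set" where
  "interior_in A C = {g \<in> C. \<exists>\<epsilon>>0. \<forall>h\<in>poly_space A.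
      (\<forall>a\<in>A. \<bar>Poly_Mapping.lookup h a - Poly_Mapping.lookup g a\<bar> < \<epsilon>) \<longrightarrow> h \<in> C}"

end

theory Submission
  imports Defs
begin


lemma conn_refl[simp]: "conn ends S a a" by (simp add: conn_def)

lemma conn_trans: "conn ends S a b \<Longrightarrow> conn ends S b c \<Longrightarrow> conn ends S a c"
  unfolding conn_def by (rule rtranclp_trans)

lemma conn_sym: "conn ends S a b \<Longrightarrow> conn ends S b a"
  unfolding conn_def
proof (induction rule: rtranclp_induct)
  case base then show ?case by simp
next
  case (step y z)
  show ?case apply (rule converse_rtranclp_into_rtranclp[OF _ step(3)]) using step(2) by blast
qed

lemma conn_mono: "S \<subseteq> S' \<Longrightarrow> conn ends S a b \<Longrightarrow> conn ends S' a b"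
  unfolding conn_def
  by (erule rtranclp_mono[THEN predicate2D, rotated]) auto

lemma conn_edge: "e \<in> S \<Longrightarrow> conn ends S (fst (ends e)) (snd (ends e))"
  unfolding conn_def by (rule r_into_rtranclp) (metis prod.collapse)

lemma conn_insert:
  "conn ends (insert e S) x y \<longleftrightarrow> conn ends S x y \<or>
     (conn ends S x (fst (ends e)) \<and> conn ends S (snd (ends e)) y) \<or>
     (conn ends S x (snd (ends e)) \<and> conn ends S (fst (ends e)) y)"
  (is "?L \<longleftrightarrow> ?R")
proof
  assume ?L
  then show ?R unfolding conn_def[of ends "insert e S"]
  proof (induction rule: rtranclp_induct)
    case base then show ?case by simp
  next
    case (step y z)
    from step(2) obtain e' where e': "e' \<in> insert e S" "ends e' = (y, z) \<or> ends e' = (z, y)" by blast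
    show ?case
    proof (cases "e' \<in> S")
      case True
      then have "conn ends S y z" using e'(2) conn_edge[OF True, of ends] conn_sym by (metis fst_conv snd_conv)
      then show ?thesis using step(3) conn_trans by metis
    next
      case False
      then have "e' = e" using e' by auto
      then have yz: "(fst (ends e) = y \<and> snd (ends e) = z) \<or> (fst (ends e) = z \<and> snd (ends e) = y)" using e'(2) by auto
      from step(3) yz show ?thesis
        by (metis conn_refl conn_sym conn_trans)
    qed
  qed
next
  assume ?R
  moreover have "conn ends (insert e S) (fst (ends e)) (snd (ends e))" by (rule conn_edge) simp
  moreover have "\<And>a b. conn ends S a b \<Longrightarrow> conn ends (insert e S) a b" by (rule conn_mono) auto
  ultimately show ?L by (metis conn_sym conn_trans)
qed

definition ncomp :: "'v set \<Rightarrow> (nat \<Rightarrow> 'v \<times> 'v) \<Rightarrow> nat set \<Rightarrow> nat" where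
  "ncomp V ends S = card (V // conn_rel V ends S)"

lemma conn_rel_image: "x \<in> V \<Longrightarrow> conn_rel V ends S `` {x} = {y\<in>V. conn ends S x y}"
  unfolding conn_rel_def by auto

lemma ncomp_insert:
  assumes V: "finite V" and u: "fst (ends e) \<in> V" and v: "snd (ends e) \<in> V"
    and nc: "\<not> conn ends S (fst (ends e)) (snd (ends e))"
  shows "ncomp V ends S = ncomp V ends (insert e S) + 1"
proof -
  define u where "u = fst (ends e)"
  define w where "w = snd (ends e)"
  define R where "R = conn_rel V ends S"
  define R' where "R' = conn_rel V ends (insert e S)"
  define Cu where "Cu = R `` {u}"
  define Cv where "Cv = R `` {w}"
  have uV: "u \<in> V" and wV: "w \<in> V" using u v u_def w_def by auto
  have ncuw: "\<not> conn ends S u w" using nc u_def w_def by simp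
  have Cu: "Cu = {y\<in>V. conn ends S u y}" unfolding Cu_def R_def using conn_rel_image[OF uV] by blast
  have Cv: "Cv = {y\<in>V. conn ends S w y}" unfolding Cv_def R_def using conn_rel_image[OF wV] by blast
  have img: "R' `` {x} = (if x \<in> Cu \<union> Cv then Cu \<union> Cv else R `` {x})" if x: "x \<in> V" for x
  proof -
    have e1: "R' `` {x} = {y\<in>V. conn ends S x y \<or> (conn ends S x u \<and> conn ends S w y) \<or>
       (conn ends S x w \<and> conn ends S u y)}"
      unfolding R'_def using conn_rel_image[OF x, of ends "insert e S"] conn_insert[of ends e S]
        u_def w_def by simp
    have e2: "R `` {x} = {y\<in>V. conn ends S x y}" unfolding R_def using conn_rel_image[OF x] by blast
    note eqs = e1 e2
    have "y \<in> R' `` {x} \<longleftrightarrow> y \<in> (if x \<in> Cu \<union> Cv then Cu \<union> Cv else R `` {x})" for y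
    proof (cases "conn ends S u x")
      case True
      then show ?thesis unfolding eqs Cu Cv using x by simp (meson conn_sym conn_trans ncuw)
    next
      case F1: False
      show ?thesis
      proof (cases "conn ends S w x")
        case True
        then show ?thesis unfolding eqs Cu Cv using x F1 by simp (meson conn_sym conn_trans ncuw)
      next
        case False
        then show ?thesis unfolding eqs Cu Cv using x F1 by simp (meson conn_sym conn_trans ncuw)
      qed
    qed
    then show ?thesis by blast
  qed
  have RinV: "R \<subseteq> V \<times> V" unfolding R_def conn_rel_def by auto
  have finQ: "finite (V // R)" using V RinV by (rule finite_quotient)
  have CuQ: "Cu \<in> V // R" using uV unfolding Cu_def by (rule quotientI)
  have CvQ: "Cv \<in> V // R" using wV unfolding Cv_def by (rule quotientI)
  have CuCv: "Cu \<noteq> Cv"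
  proof
    assume "Cu = Cv"
    then have "u \<in> Cv" using uV Cu by auto
    then have "conn ends S w u" using Cv by simp
    from conn_sym[OF this] show False using ncuw by simp
  qed
  have Q: "V // R' = insert (Cu \<union> Cv) (V // R - {Cu, Cv})"
  proof
    show "V // R' \<subseteq> insert (Cu \<union> Cv) (V // R - {Cu, Cv})"
    proof
      fix X assume "X \<in> V // R'"
      then obtain x where x: "x \<in> V" "X = R' `` {x}" by (auto elim: quotientE)
      show "X \<in> insert (Cu \<union> Cv) (V // R - {Cu, Cv})"
      proof (cases "x \<in> Cu \<union> Cv")
        case True then show ?thesis using img[OF x(1)] x(2) by simp
      next
        case False
        have "x \<in> R `` {x}" using x(1) unfolding R_def conn_rel_def by auto
        then have "R `` {x} \<noteq> Cu" "R `` {x} \<noteq> Cv" using False by auto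
        moreover have "R `` {x} \<in> V // R" using x(1) by (rule quotientI)
        ultimately show ?thesis using img[OF x(1)] x(2) False by simp
      qed
    qed
  next
    show "insert (Cu \<union> Cv) (V // R - {Cu, Cv}) \<subseteq> V // R'"
    proof
      fix X assume X: "X \<in> insert (Cu \<union> Cv) (V // R - {Cu, Cv})"
      show "X \<in> V // R'"
      proof (cases "X = Cu \<union> Cv")
        case True
        have "u \<in> Cu" using uV Cu by simp
        then have "R' `` {u} = Cu \<union> Cv" using img[OF uV] by simp
        then show ?thesis using True quotientI[OF uV, of R'] by simp
      next
        case False
        then have "X \<in> V // R" "X \<noteq> Cu" "X \<noteq> Cv" using X by auto
        then obtain x where x: "x \<in> V" "X = R `` {x}" by (auto elim: quotientE)
        have "x \<notin> Cu"
        proof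
          assume "x \<in> Cu"
          then have "X = Cu" unfolding x(2) Cu R_def conn_rel_image[OF x(1)]
            by (intro set_eqI) (simp, meson conn_sym conn_trans)
          then show False using \<open>X \<noteq> Cu\<close> by simp
        qed
        moreover have "x \<notin> Cv"
        proof
          assume "x \<in> Cv"
          then have "X = Cv" unfolding x(2) Cv R_def conn_rel_image[OF x(1)]
            by (intro set_eqI) (simp, meson conn_sym conn_trans)
          then show False using \<open>X \<noteq> Cv\<close> by simp
        qed
        ultimately have "R' `` {x} = X" using img[OF x(1)] x(2) by simp
        then show ?thesis using quotientI[OF x(1), of R'] by simp
      qed
    qed
  qed
  have notin: "Cu \<union> Cv \<notin> V // R - {Cu, Cv}"
  proof
    assume "Cu \<union> Cv \<in> V // R - {Cu, Cv}"
    then obtain x where x: "x \<in> V" "Cu \<union> Cv = R `` {x}" by (meson DiffD1 quotientE)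
    have "u \<in> Cu" "w \<in> Cv" using uV wV Cu Cv by auto
    then have "conn ends S x u" "conn ends S x w" using x unfolding R_def conn_rel_image[OF x(1)] by auto
    then show False using ncuw by (meson conn_sym conn_trans)
  qed
  have "card (V // R') = Suc (card (V // R - {Cu, Cv}))"
    unfolding Q using finQ notin by simp
  also have "card (V // R - {Cu, Cv}) = card (V // R) - 2"
    using finQ CuQ CvQ CuCv by (simp add: card_Diff_subset)
  finally have 1: "card (V // R') = Suc (card (V // R) - 2)" .
  have "card {Cu, Cv} \<le> card (V // R)" using finQ CuQ CvQ by (intro card_mono) auto
  then have "2 \<le> card (V // R)" using CuCv by simp
  then have "card (V // R') + 1 = card (V // R)" using 1 by simp
  then show ?thesis unfolding ncomp_def R_def R'_def by simp
qed

lemma forest_subset: "is_forest ends n S' \<Longrightarrow> S \<subseteq> S' \<Longrightarrow> is_forest ends n S"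
proof -
  assume f: "is_forest ends n S'" and sub: "S \<subseteq> S'"
  have "\<not> conn ends (S - {e}) (fst (ends e)) (snd (ends e))" if "e \<in> S" for e
  proof
    assume "conn ends (S - {e}) (fst (ends e)) (snd (ends e))"
    then have "conn ends (S' - {e}) (fst (ends e)) (snd (ends e))" by (rule conn_mono[rotated]) (use sub in auto)
    then show False using f that sub unfolding is_forest_def by auto
  qed
  then show ?thesis using f sub unfolding is_forest_def by auto
qed

lemma ncomp_chain_aux:
  assumes cg: "connected_graph V ends n" and D: "finite D"
  shows "D \<inter> S = {} \<Longrightarrow> is_forest ends n (S \<union> D) \<Longrightarrow> ncomp V ends S = ncomp V ends (S \<union> D) + card D"
  using D
proof (induction D rule: finite_induct)
  case empty then show ?case by simp
next
  case (insert e D)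
  have fD: "is_forest ends n (S \<union> D)" using insert.prems(2) by (rule forest_subset) auto
  have IH: "ncomp V ends S = ncomp V ends (S \<union> D) + card D" using insert by (intro insert.IH fD) auto
  have eS: "e \<notin> S \<union> D" using insert by auto
  have fe: "is_forest ends n (insert e (S \<union> D))" using insert.prems(2) by simp
  then have en: "e < n" unfolding is_forest_def by auto
  have "\<not> conn ends (insert e (S \<union> D) - {e}) (fst (ends e)) (snd (ends e))"
    using fe unfolding is_forest_def by blast
  moreover have "insert e (S \<union> D) - {e} = S \<union> D" using eS by auto
  ultimately have nc: "\<not> conn ends (S \<union> D) (fst (ends e)) (snd (ends e))" by simp
  have "ncomp V ends (S \<union> D) = ncomp V ends (insert e (S \<union> D)) + 1"
    using cg en nc unfolding connected_graph_def by (intro ncomp_insert) auto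
  then show ?case using IH insert by simp
qed

lemma ncomp_chain:
  assumes cg: "connected_graph V ends n" and f: "is_forest ends n S'" and sub: "S \<subseteq> S'"
  shows "ncomp V ends S = ncomp V ends S' + card (S' - S)"
proof -
  have "finite (S' - S)" using f unfolding is_forest_def by (meson finite_Diff finite_atLeastLessThan finite_subset)
  moreover have "S \<union> (S' - S) = S'" using sub by auto
  ultimately show ?thesis using ncomp_chain_aux[OF cg, of "S' - S" S] f by auto
qed

lemma tree_ncomp:
  assumes cg: "connected_graph V ends n" and T: "T \<in> spanning_trees V ends n"
  shows "ncomp V ends T = 1"
proof -
  have "V // conn_rel V ends T = {V}"
  proof -
    have "conn_rel V ends T `` {x} = V" if "x \<in> V" for x
      using T that unfolding conn_rel_image[OF that] spanning_trees_def by auto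
    moreover have "V \<noteq> {}" using cg unfolding connected_graph_def by simp
    ultimately show ?thesis unfolding quotient_def by auto
  qed
  then show ?thesis unfolding ncomp_def by simp
qed

lemma tree_minus_edge:
  assumes cg: "connected_graph V ends n" and T: "T \<in> spanning_trees V ends n" and e: "e \<in> T"
  shows "T - {e} \<in> spanning_2forests V ends n"
proof -
  have fT: "is_forest ends n T" using T unfolding spanning_trees_def by simp
  have "ncomp V ends (T - {e}) = ncomp V ends T + card (T - (T - {e}))"
    by (rule ncomp_chain[OF cg fT]) auto
  moreover have "T - (T - {e}) = {e}" using e by auto
  ultimately have "ncomp V ends (T - {e}) = 2" using tree_ncomp[OF cg T] by simp
  moreover have "is_forest ends n (T - {e})" using fT by (rule forest_subset) auto
  ultimately show ?thesis unfolding spanning_2forests_def ncomp_def by simp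
qed

lemma forest2_sub:
  assumes cg: "connected_graph V ends n" and F: "F \<in> spanning_2forests V ends n"
    and F': "F' \<in> spanning_2forests V ends n" and sub: "F \<subseteq> F'"
  shows "F = F'"
proof -
  have fF: "is_forest ends n F'" using F' unfolding spanning_2forests_def by simp
  have "ncomp V ends F = ncomp V ends F' + card (F' - F)" using ncomp_chain[OF cg fF sub] .
  then have "card (F' - F) = 0" using F F' unfolding spanning_2forests_def ncomp_def by simp
  moreover have "finite (F' - F)" using fF unfolding is_forest_def by (meson finite_Diff finite_atLeastLessThan finite_subset)
  ultimately show ?thesis using sub by auto
qed

lemma tree_sub:
  assumes cg: "connected_graph V ends n" and T: "T \<in> spanning_trees V ends n"
    and T': "T' \<in> spanning_trees V ends n" and sub: "T \<subseteq> T'"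
  shows "T = T'"
proof -
  have fF: "is_forest ends n T'" using T' unfolding spanning_trees_def by simp
  have "ncomp V ends T = ncomp V ends T' + card (T' - T)" using ncomp_chain[OF cg fF sub] .
  then have "card (T' - T) = 0" using tree_ncomp[OF cg T] tree_ncomp[OF cg T'] by simp
  moreover have "finite (T' - T)" using fF unfolding is_forest_def by (meson finite_Diff finite_atLeastLessThan finite_subset)
  ultimately show ?thesis using sub by auto
qed

lemma forest2_tree_sub:
  assumes cg: "connected_graph V ends n" and F: "F \<in> spanning_2forests V ends n"
    and T: "T \<in> spanning_trees V ends n" and sub: "F \<subseteq> T"
  shows "\<exists>j. j \<notin> F \<and> T = insert j F"
proof -
  have fF: "is_forest ends n T" using T unfolding spanning_trees_def by simp
  have "ncomp V ends F = ncomp V ends T + card (T - F)" using ncomp_chain[OF cg fF sub] .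
  then have "card (T - F) = 1" using F tree_ncomp[OF cg T] unfolding spanning_2forests_def ncomp_def by simp
  then obtain j where "T - F = {j}" by (meson card_1_singletonE)
  then show ?thesis using sub by blast
qed



lemma lookup_expo: "Poly_Mapping.lookup (expo n S) i = (if i < n \<and> i \<notin> S then 1 else 0)"
  unfolding expo_def by (simp add: lookup_sum lookup_single when_def)

lemma keys_expo: "Poly_Mapping.keys (expo n S) \<subseteq> {0..<n}"
  by (auto simp: in_keys_iff lookup_expo split: if_splits)

lemma lookup_single1: "Poly_Mapping.lookup (Poly_Mapping.single e (1::nat)) i = (if e = i then 1 else 0)"
  by (simp add: lookup_single when_def)

lemma expo_inj:
  assumes "S \<subseteq> {0..<n}" "S' \<subseteq> {0..<n}" "expo n S = expo n S'"
  shows "S = S'"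
proof -
  have "\<And>i. Poly_Mapping.lookup (expo n S) i = Poly_Mapping.lookup (expo n S') i" using assms(3) by simp
  then have "\<And>i. i < n \<Longrightarrow> (i \<in> S \<longleftrightarrow> i \<in> S')" unfolding lookup_expo by (metis one_neq_zero)
  then show ?thesis using assms(1,2) by auto
qed

lemma single_expo_eq_expo:
  assumes e: "e < n" and T: "T \<subseteq> {0..<n}" and F: "F \<subseteq> {0..<n}"
  shows "Poly_Mapping.single e 1 + expo n T = expo n F \<longleftrightarrow> e \<notin> F \<and> T = insert e F"
proof
  assume h: "Poly_Mapping.single e 1 + expo n T = expo n F"
  have l: "\<And>i. (if e = i then 1 else 0) + (if i < n \<and> i \<notin> T then 1 else (0::nat)) = (if i < n \<and> i \<notin> F then 1 else 0)"
  proof -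
    fix i
    have "Poly_Mapping.lookup (Poly_Mapping.single e 1 + expo n T) i = Poly_Mapping.lookup (expo n F) i" using h by simp
    then show "?thesis i" by (simp only: lookup_add lookup_expo lookup_single when_def)
  qed
  from l[of e] e have "e \<in> T" "e \<notin> F" by (auto split: if_splits)
  moreover have "i \<noteq> e \<Longrightarrow> i < n \<Longrightarrow> (i \<in> T \<longleftrightarrow> i \<in> F)" for i using l[of i] by (auto split: if_splits)
  ultimately show "e \<notin> F \<and> T = insert e F"
  proof (intro conjI set_eqI)
    fix x
    show "x \<in> T \<longleftrightarrow> x \<in> insert e F"
    proof (cases "x = e")
      case True then show ?thesis using \<open>e \<in> T\<close> by simp
    next
      case False
      then show ?thesis using \<open>\<And>i. i \<noteq> e \<Longrightarrow> i < n \<Longrightarrow> (i \<in> T \<longleftrightarrow> i \<in> F)\<close>[of x] T F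
        by (cases "x < n") auto
    qed
  qed
next
  assume h: "e \<notin> F \<and> T = insert e F"
  show "Poly_Mapping.single e 1 + expo n T = expo n F"
    by (rule poly_mapping_eqI) (use h e in \<open>auto simp: lookup_add lookup_expo lookup_single when_def\<close>)
qed

lemma single_expo_eq_single_expo:
  assumes e: "e < n" "e' < n" and T: "T \<subseteq> {0..<n}" "T' \<subseteq> {0..<n}" and eT: "e \<notin> T"
  shows "Poly_Mapping.single e' 1 + expo n T' = Poly_Mapping.single e 1 + expo n T \<longleftrightarrow> e' = e \<and> T' = T"
proof
  assume h: "Poly_Mapping.single e' 1 + expo n T' = Poly_Mapping.single e 1 + expo n T"
  have l: "\<And>i. (if e' = i then 1 else 0) + (if i < n \<and> i \<notin> T' then 1 else (0::nat)) = (if e = i then 1 else 0) + (if i < n \<and> i \<notin> T then 1 else 0)"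
  proof -
    fix i
    have "Poly_Mapping.lookup (Poly_Mapping.single e' 1 + expo n T') i = Poly_Mapping.lookup (Poly_Mapping.single e 1 + expo n T) i" using h by simp
    then show "?thesis i" by (simp only: lookup_add lookup_expo lookup_single when_def)
  qed
  from l[of e] e eT have ee: "e' = e" by (auto split: if_splits)
  then have "i < n \<Longrightarrow> (i \<in> T' \<longleftrightarrow> i \<in> T)" for i using l[of i] by (auto split: if_splits)
  then show "e' = e \<and> T' = T" using T ee by auto
qed simp

lemma expo_ne_single_expo:
  assumes e: "e < n" and eT: "e \<notin> T"
  shows "expo n F \<noteq> Poly_Mapping.single e 1 + expo n T"
proof
  assume "expo n F = Poly_Mapping.single e 1 + expo n T"
  then have "Poly_Mapping.lookup (expo n F) e = Poly_Mapping.lookup (Poly_Mapping.single e 1 + expo n T) e" by simp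
  then show False using e eT by (simp add: lookup_add lookup_expo lookup_single when_def split: if_splits)
qed

lemma sum_delta_const: "finite S \<Longrightarrow> (\<Sum>x\<in>S. if x = a then (c::real) else 0) = (if a \<in> S then c else 0)"
  using sum.delta[of S a "\<lambda>_. c"] by simp

lemma symF_expand:
  "symanzik_F V ends n L E z m =
     (\<Sum>F\<in>spanning_2forests V ends n. Poly_Mapping.single (expo n F) (L F z)) +
     (\<Sum>e\<in>E. \<Sum>T\<in>spanning_trees V ends n. Poly_Mapping.single (Poly_Mapping.single e 1 + expo n T) (m e))"
  unfolding symanzik_F_def symanzik_U_def sum_product mult_single by simp

lemma lookup_symF:
  "Poly_Mapping.lookup (symanzik_F V ends n L E z m) b =
     (\<Sum>F\<in>spanning_2forests V ends n. if expo n F = b then L F z else 0) +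
     (\<Sum>e\<in>E. \<Sum>T\<in>spanning_trees V ends n. if Poly_Mapping.single e 1 + expo n T = b then m e else 0)"
  unfolding symF_expand by (simp add: lookup_add lookup_sum lookup_single when_def)

lemma keys_symF:
  "Poly_Mapping.keys (symanzik_F V ends n L E z m) \<subseteq>
     expo n ` spanning_2forests V ends n \<union>
     {Poly_Mapping.single e 1 + expo n T | e T. e \<in> E \<and> T \<in> spanning_trees V ends n}"
proof -
  have "Poly_Mapping.keys (symanzik_F V ends n L E z m) \<subseteq>
     Poly_Mapping.keys (\<Sum>F\<in>spanning_2forests V ends n. Poly_Mapping.single (expo n F) (L F z)) \<union>
     Poly_Mapping.keys (\<Sum>e\<in>E. \<Sum>T\<in>spanning_trees V ends n. Poly_Mapping.single (Poly_Mapping.single e 1 + expo n T) (m e))"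
    unfolding symF_expand by (rule keys_add)
  also have "\<dots> \<subseteq> expo n ` spanning_2forests V ends n \<union>
     {Poly_Mapping.single e 1 + expo n T | e T. e \<in> E \<and> T \<in> spanning_trees V ends n}"
  proof (rule Un_mono)
    show "Poly_Mapping.keys (\<Sum>F\<in>spanning_2forests V ends n. Poly_Mapping.single (expo n F) (L F z)) \<subseteq> expo n ` spanning_2forests V ends n"
      using keys_sum[of "\<lambda>F. Poly_Mapping.single (expo n F) (L F z)" "spanning_2forests V ends n"]
      by (auto split: if_splits)
    have "Poly_Mapping.keys (\<Sum>e\<in>E. \<Sum>T\<in>spanning_trees V ends n. Poly_Mapping.single (Poly_Mapping.single e 1 + expo n T) (m e))
       \<subseteq> (\<Union>e\<in>E. Poly_Mapping.keys (\<Sum>T\<in>spanning_trees V ends n. Poly_Mapping.single (Poly_Mapping.single e 1 + expo n T) (m e)))"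
      by (rule keys_sum)
    also have "\<dots> \<subseteq> (\<Union>e\<in>E. \<Union>T\<in>spanning_trees V ends n. Poly_Mapping.keys (Poly_Mapping.single (Poly_Mapping.single e 1 + expo n T) (m e)))"
      by (intro UN_mono order_refl keys_sum)
    also have "\<dots> \<subseteq> {Poly_Mapping.single e 1 + expo n T | e T. e \<in> E \<and> T \<in> spanning_trees V ends n}"
      by (auto split: if_splits)
    finally show "Poly_Mapping.keys (\<Sum>e\<in>E. \<Sum>T\<in>spanning_trees V ends n. Poly_Mapping.single (Poly_Mapping.single e 1 + expo n T) (m e))
       \<subseteq> {Poly_Mapping.single e 1 + expo n T | e T. e \<in> E \<and> T \<in> spanning_trees V ends n}" .
  qed
  finally show ?thesis .
qed

lemma trees_sub: "T \<in> spanning_trees V ends n \<Longrightarrow> T \<subseteq> {0..<n}"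
  unfolding spanning_trees_def is_forest_def by auto

lemma forests_sub: "F \<in> spanning_2forests V ends n \<Longrightarrow> F \<subseteq> {0..<n}"
  unfolding spanning_2forests_def is_forest_def by auto

lemma finite_trees: "finite (spanning_trees V ends n)"
  by (rule finite_subset[of _ "Pow {0..<n}"]) (auto dest: trees_sub)

lemma finite_forests: "finite (spanning_2forests V ends n)"
  by (rule finite_subset[of _ "Pow {0..<n}"]) (auto dest: forests_sub)

lemma coeff_forest:
  assumes F: "F \<in> spanning_2forests V ends n" and E: "E \<subseteq> {0..<n}"
  shows "Poly_Mapping.lookup (symanzik_F V ends n L E z m) (expo n F) =
     L F z + (\<Sum>e\<in>{e\<in>E. e \<notin> F \<and> insert e F \<in> spanning_trees V ends n}. m e)"
proof -
  have 1: "(\<Sum>F'\<in>spanning_2forests V ends n. if expo n F' = expo n F then L F' z else 0) = L F z"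
  proof -
    have "(\<Sum>F'\<in>spanning_2forests V ends n. if expo n F' = expo n F then L F' z else 0) =
          (\<Sum>F'\<in>spanning_2forests V ends n. if F' = F then L F' z else 0)"
      by (intro sum.cong refl) (metis F expo_inj forests_sub)
    also have "\<dots> = L F z" by (subst sum.delta[OF finite_forests[of V ends n]]) (simp add: F)
    finally show ?thesis .
  qed
  have 2: "(\<Sum>T\<in>spanning_trees V ends n. if Poly_Mapping.single e 1 + expo n T = expo n F then m e else 0) =
      (if e \<notin> F \<and> insert e F \<in> spanning_trees V ends n then m e else 0)" if e: "e \<in> E" for e
  proof -
    have "(\<Sum>T\<in>spanning_trees V ends n. if Poly_Mapping.single e 1 + expo n T = expo n F then m e else 0) =
        (\<Sum>T\<in>spanning_trees V ends n. if e \<notin> F \<and> T = insert e F then m e else 0)"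
    proof (intro sum.cong refl)
      fix T assume T: "T \<in> spanning_trees V ends n"
      have "e < n" using e E by auto
      then have "Poly_Mapping.single e 1 + expo n T = expo n F \<longleftrightarrow> e \<notin> F \<and> T = insert e F"
        by (rule single_expo_eq_expo[OF _ trees_sub[OF T] forests_sub[OF F]])
      then show "(if Poly_Mapping.single e 1 + expo n T = expo n F then m e else 0) =
          (if e \<notin> F \<and> T = insert e F then m e else 0)" by simp
    qed
    also have "\<dots> = (if e \<notin> F \<and> insert e F \<in> spanning_trees V ends n then m e else 0)"
    proof (cases "e \<notin> F")
      case True
      then show ?thesis using sum_delta_const[OF finite_trees[of V ends n], of "insert e F" "m e"] by simp
    qed simp
    finally show ?thesis .
  qed
  have "(\<Sum>e\<in>E. \<Sum>T\<in>spanning_trees V ends n. if Poly_Mapping.single e 1 + expo n T = expo n F then m e else 0)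
     = (\<Sum>e\<in>E. if e \<notin> F \<and> insert e F \<in> spanning_trees V ends n then m e else 0)"
    using 2 by (rule sum.cong[OF refl])
  also have "\<dots> = (\<Sum>e\<in>{e\<in>E. e \<notin> F \<and> insert e F \<in> spanning_trees V ends n}. m e)"
    using E by (simp add: sum.inter_filter finite_subset)
  finally show ?thesis unfolding lookup_symF 1 by simp
qed

lemma coeff_square:
  assumes T: "T \<in> spanning_trees V ends n" and e: "e \<in> E" "e \<notin> T" and E: "E \<subseteq> {0..<n}"
  shows "Poly_Mapping.lookup (symanzik_F V ends n L E z m) (Poly_Mapping.single e 1 + expo n T) = m e"
proof -
  have en: "e < n" using e E by auto
  have 1: "(\<Sum>F'\<in>spanning_2forests V ends n. if expo n F' = Poly_Mapping.single e 1 + expo n T then L F' z else 0) = 0"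
    using expo_ne_single_expo[OF en e(2)] by simp
  have "(\<Sum>e'\<in>E. \<Sum>T'\<in>spanning_trees V ends n. if Poly_Mapping.single e' 1 + expo n T' = Poly_Mapping.single e 1 + expo n T then m e' else 0)
     = (\<Sum>e'\<in>E. \<Sum>T'\<in>spanning_trees V ends n. if e' = e \<and> T' = T then m e' else 0)"
  proof (intro sum.cong refl)
    fix e' T' assume e': "e' \<in> E" and T': "T' \<in> spanning_trees V ends n"
    have "e' < n" using e' E by auto
    then have "Poly_Mapping.single e' 1 + expo n T' = Poly_Mapping.single e 1 + expo n T \<longleftrightarrow> e' = e \<and> T' = T"
      by (rule single_expo_eq_single_expo[OF en _ trees_sub[OF T] trees_sub[OF T'] e(2)])
    then show "(if Poly_Mapping.single e' 1 + expo n T' = Poly_Mapping.single e 1 + expo n T then m e' else 0) =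
          (if e' = e \<and> T' = T then m e' else 0)" by simp
  qed
  also have "\<dots> = (\<Sum>e'\<in>E. if e' = e then m e' else 0)"
  proof (intro sum.cong refl)
    fix e' assume "e' \<in> E"
    show "(\<Sum>T'\<in>spanning_trees V ends n. if e' = e \<and> T' = T then m e' else 0) = (if e' = e then m e' else 0)"
      using sum_delta_const[OF finite_trees[of V ends n], of T "m e"] T by (cases "e' = e") auto
  qed
  also have "\<dots> = m e" using e E by (simp add: finite_subset)
  finally show ?thesis unfolding lookup_symF 1 by simp
qed



definition monom_val :: "(nat \<Rightarrow>\<^sub>0 nat) \<Rightarrow> (nat \<Rightarrow> real) \<Rightarrow> real" where
  "monom_val b x = (\<Prod>i\<in>Poly_Mapping.keys b. x i ^ Poly_Mapping.lookup b i)"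

definition ip :: "nat \<Rightarrow> (nat \<Rightarrow> real) \<Rightarrow> (nat \<Rightarrow>\<^sub>0 nat) \<Rightarrow> real" where
  "ip n w b = (\<Sum>i\<in>{0..<n}. w i * real (Poly_Mapping.lookup b i))"

lemma peval_superset:
  assumes "finite B" "Poly_Mapping.keys p \<subseteq> B"
  shows "peval p x = (\<Sum>b\<in>B. Poly_Mapping.lookup p b * monom_val b x)"
  unfolding peval_def monom_val_def
  by (rule sum.mono_neutral_left) (use assms in \<open>auto simp: in_keys_iff\<close>)

lemma mono_powr:
  assumes t: "t > 0" and kb: "Poly_Mapping.keys b \<subseteq> {0..<n}"
  shows "monom_val b (\<lambda>i. t powr w i) = t powr ip n w b"
proof -
  have "monom_val b (\<lambda>i. t powr w i) = (\<Prod>i\<in>Poly_Mapping.keys b. t powr (real (Poly_Mapping.lookup b i) * w i))"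
    unfolding monom_val_def using t by (intro prod.cong refl) (simp add: powr_power)
  also have "\<dots> = t powr (\<Sum>i\<in>Poly_Mapping.keys b. real (Poly_Mapping.lookup b i) * w i)"
    using t by (simp add: powr_sum)
  also have "(\<Sum>i\<in>Poly_Mapping.keys b. real (Poly_Mapping.lookup b i) * w i) = ip n w b"
    unfolding ip_def
    by (rule sum.mono_neutral_cong_left) (use kb in \<open>auto simp: in_keys_iff\<close>)
  finally show ?thesis .
qed

lemma vertex:
  assumes A: "finite A" and a: "a \<in> A" and kg: "Poly_Mapping.keys g \<subseteq> A"
    and kA: "\<forall>b\<in>A. Poly_Mapping.keys b \<subseteq> {0..<n}"
    and nonneg: "\<forall>x. (\<forall>i<n. x i > 0) \<longrightarrow> peval g x \<ge> 0"
    and sep: "\<forall>b\<in>A - {a}. ip n w b \<le> ip n w a - 1"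
  shows "Poly_Mapping.lookup g a \<ge> 0"
proof (rule ccontr)
  assume "\<not> ?thesis"
  then have ga: "Poly_Mapping.lookup g a < 0" by simp
  define S where "S = (\<Sum>b\<in>A - {a}. \<bar>Poly_Mapping.lookup g b\<bar>)"
  have S0: "S \<ge> 0" unfolding S_def by (rule sum_nonneg) simp
  define t where "t = S / (- Poly_Mapping.lookup g a) + 2"
  have t1: "t \<ge> 1" unfolding t_def using S0 ga by (simp add: divide_nonneg_pos)
  have tpos: "t > 0" using t1 by simp
  define W where "W = ip n w a"
  define x where "x = (\<lambda>i. t powr w i)"
  have "peval g x = (\<Sum>b\<in>A. Poly_Mapping.lookup g b * monom_val b x)"
    by (rule peval_superset[OF A kg])
  also have "\<dots> = Poly_Mapping.lookup g a * monom_val a x + (\<Sum>b\<in>A - {a}. Poly_Mapping.lookup g b * monom_val b x)"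
    using A a by (simp add: sum.remove)
  also have "(\<Sum>b\<in>A - {a}. Poly_Mapping.lookup g b * monom_val b x) \<le> (\<Sum>b\<in>A - {a}. \<bar>Poly_Mapping.lookup g b\<bar> * t powr (W - 1))"
  proof (rule sum_mono)
    fix b assume b: "b \<in> A - {a}"
    have "monom_val b x = t powr ip n w b" unfolding x_def using kA b tpos by (intro mono_powr) auto
    moreover have "t powr ip n w b \<le> t powr (W - 1)" using sep b t1 unfolding W_def by (intro powr_mono) auto
    ultimately have "\<bar>Poly_Mapping.lookup g b\<bar> * monom_val b x \<le> \<bar>Poly_Mapping.lookup g b\<bar> * t powr (W - 1)"
      by (simp add: mult_left_mono)
    moreover have "Poly_Mapping.lookup g b * monom_val b x \<le> \<bar>Poly_Mapping.lookup g b\<bar> * monom_val b x"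
      using \<open>monom_val b x = t powr ip n w b\<close> by (intro mult_right_mono) auto
    ultimately show "Poly_Mapping.lookup g b * monom_val b x \<le> \<bar>Poly_Mapping.lookup g b\<bar> * t powr (W - 1)" by linarith
  qed
  also have "(\<Sum>b\<in>A - {a}. \<bar>Poly_Mapping.lookup g b\<bar> * t powr (W - 1)) = S * t powr (W - 1)"
    unfolding S_def by (simp add: sum_distrib_right)
  also have "monom_val a x = t * t powr (W - 1)"
  proof -
    have "monom_val a x = t powr W" unfolding x_def W_def using kA a tpos by (intro mono_powr) auto
    also have "\<dots> = t powr (1 + (W - 1))" by simp
    also have "\<dots> = t powr 1 * t powr (W - 1)" by (rule powr_add)
    also have "t powr 1 = t" using tpos by simp
    finally show ?thesis .
  qed
  finally have "peval g x \<le> t powr (W - 1) * (Poly_Mapping.lookup g a * t + S)" by (simp add: algebra_simps)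
  moreover have "Poly_Mapping.lookup g a * t + S < 0"
    unfolding t_def using ga by (simp add: algebra_simps)
  moreover have "t powr (W - 1) > 0" using tpos by simp
  ultimately have "peval g x < 0" by (metis mult_pos_neg order_le_less_trans)
  moreover have "peval g x \<ge> 0" using nonneg tpos unfolding x_def by simp
  ultimately show False by simp
qed

lemma interior_pos:
  assumes f: "f \<in> interior_in A (nonneg_cone n A)" and A: "finite A" and a: "a \<in> A"
    and kA: "\<forall>b\<in>A. Poly_Mapping.keys b \<subseteq> {0..<n}"
    and sep: "\<forall>b\<in>A - {a}. ip n w b \<le> ip n w a - 1"
  shows "Poly_Mapping.lookup f a > 0"
proof -
  obtain eps where eps: "eps > 0" and box: "\<forall>h\<in>poly_space A.
      (\<forall>b\<in>A. \<bar>Poly_Mapping.lookup h b - Poly_Mapping.lookup f b\<bar> < eps) \<longrightarrow> h \<in> nonneg_cone n A"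
    and fC: "f \<in> nonneg_cone n A"
    using f unfolding interior_in_def by blast
  define h where "h = f - Poly_Mapping.single a (eps / 2)"
  have lh: "Poly_Mapping.lookup h b = Poly_Mapping.lookup f b - (if a = b then eps / 2 else 0)" for b
    unfolding h_def by (simp add: lookup_minus lookup_single when_def)
  have kf: "Poly_Mapping.keys f \<subseteq> A" using fC unfolding nonneg_cone_def poly_space_def by simp
  have "Poly_Mapping.keys h \<subseteq> A"
  proof
    fix b assume "b \<in> Poly_Mapping.keys h"
    then have "Poly_Mapping.lookup h b \<noteq> 0" by (simp add: in_keys_iff)
    then show "b \<in> A" using kf a lh[of b] by (auto simp: in_keys_iff split: if_splits)
  qed
  then have hP: "h \<in> poly_space A" unfolding poly_space_def by simp
  have "\<forall>b\<in>A. \<bar>Poly_Mapping.lookup h b - Poly_Mapping.lookup f b\<bar> < eps" using eps lh by simp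
  then have "h \<in> nonneg_cone n A" using box hP by blast
  then have "Poly_Mapping.lookup h a \<ge> 0"
    using vertex[OF A a _ kA _ sep] unfolding nonneg_cone_def poly_space_def by blast
  then show ?thesis using lh[of a] eps by simp
qed



lemma ip_split:
  assumes XY: "X \<inter> Y = {}" and X: "X \<subseteq> {0..<n}" and Y: "Y \<subseteq> {0..<n}"
  shows "ip n (\<lambda>i. if i \<in> X then - K else if i \<in> Y then 1 else 0) b =
     - K * (\<Sum>i\<in>X. real (Poly_Mapping.lookup b i)) + (\<Sum>i\<in>Y. real (Poly_Mapping.lookup b i))"
proof -
  have "ip n (\<lambda>i. if i \<in> X then - K else if i \<in> Y then 1 else 0) b =
    (\<Sum>i\<in>{0..<n}. (if i \<in> X then - K * real (Poly_Mapping.lookup b i) else 0) +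
        (if i \<in> Y then real (Poly_Mapping.lookup b i) else 0))"
    unfolding ip_def using XY by (intro sum.cong refl) auto
  also have "\<dots> = (\<Sum>i\<in>{0..<n} \<inter> X. - K * real (Poly_Mapping.lookup b i)) + (\<Sum>i\<in>{0..<n} \<inter> Y. real (Poly_Mapping.lookup b i))"
    by (simp only: sum.distrib sum.inter_restrict[OF finite_atLeastLessThan])
  also have "{0..<n} \<inter> X = X" using X by auto
  also have "{0..<n} \<inter> Y = Y" using Y by auto
  finally show ?thesis by (simp add: sum_distrib_left)
qed

lemma posC:
  assumes kh: "Poly_Mapping.keys h \<subseteq> A" and kA: "\<forall>b\<in>A. Poly_Mapping.keys b \<subseteq> {0..<n}"
    and pos: "\<forall>b\<in>A. Poly_Mapping.lookup h b \<ge> 0"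
  shows "h \<in> nonneg_cone n A"
proof -
  have "peval h x \<ge> 0" if x: "\<forall>i<n. x i > 0" for x
    unfolding peval_def
  proof (intro sum_nonneg mult_nonneg_nonneg)
    fix b assume b: "b \<in> Poly_Mapping.keys h"
    show "Poly_Mapping.lookup h b \<ge> 0" using pos kh b by auto
    have "Poly_Mapping.keys b \<subseteq> {0..<n}" using kA kh b by auto
    then show "(\<Prod>i\<in>Poly_Mapping.keys b. x i ^ Poly_Mapping.lookup b i) \<ge> 0"
      using x by (intro prod_nonneg) (metis atLeastLessThan_iff less_imp_le subsetD zero_le_power)
  qed
  then show ?thesis unfolding nonneg_cone_def poly_space_def using kh by auto
qed

lemma sum_nat_real_zero_or_ge1:
  fixes g :: "nat \<Rightarrow> nat"
  assumes "finite X"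
  shows "(\<forall>i\<in>X. g i = 0) \<or> (\<Sum>i\<in>X. real (g i)) \<ge> 1"
proof (cases "\<forall>i\<in>X. g i = 0")
  case False
  then obtain i where i: "i \<in> X" "g i \<noteq> 0" by auto
  have "real (g i) \<le> (\<Sum>i\<in>X. real (g i))" using assms i by (intro member_le_sum) auto
  then show ?thesis using i by auto
qed simp

theorem mainTheorem18:
  fixes V :: "'v set" and ends :: "nat \<Rightarrow> 'v \<times> 'v" and n :: nat
    and L :: "nat set \<Rightarrow> real^'k \<Rightarrow> real" and E :: "nat set"
  assumes "connected_graph V ends n"
    and "\<forall>F\<in>spanning_2forests V ends n. linear (L F)"
    and "E \<subseteq> {0..<n}"
  shows "(kinematic_space V ends n L E \<inter>
            interior_in (generic_support V ends n L E)
              (nonneg_cone n (generic_support V ends n L E)) \<noteq> {})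
     \<longleftrightarrow> (\<exists>f\<in>kinematic_space V ends n L E.
            \<forall>a\<in>generic_support V ends n L E. Poly_Mapping.lookup f a > 0)"
proof -
  note cg = assms(1) and En = assms(3)
  define Wf where "Wf = spanning_2forests V ends n"
  define Tr where "Tr = spanning_trees V ends n"
  define K where "K = kinematic_space V ends n L E"
  define A where "A = generic_support V ends n L E"
  define Cand where "Cand = expo n ` Wf \<union> {Poly_Mapping.single e 1 + expo n T | e T. e \<in> E \<and> T \<in> Tr}"
  have AC: "A \<subseteq> Cand"
  proof
    fix b assume "b \<in> A"
    then obtain z m where "b \<in> Poly_Mapping.keys (symanzik_F V ends n L E z m)"
      unfolding A_def generic_support_def kinematic_space_def by blast
    then show "b \<in> Cand" using keys_symF[of V ends n L E z m] unfolding Cand_def Wf_def Tr_def by blast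
  qed
  have finE: "finite E" using En finite_subset by blast
  have C2: "{Poly_Mapping.single e 1 + expo n T | e T. e \<in> E \<and> T \<in> Tr} =
      (\<lambda>(e, T). Poly_Mapping.single e 1 + expo n T) ` (E \<times> Tr)" by auto
  have finCand: "finite Cand" unfolding Cand_def C2
    using finE finite_forests[of V ends n] finite_trees[of V ends n] unfolding Wf_def Tr_def by auto
  have finA: "finite A" using AC finCand finite_subset by blast
  have candkeys: "Poly_Mapping.keys b \<subseteq> {0..<n}" if "b \<in> Cand" for b
  proof -
    from that consider (f) F where "b = expo n F" | (s) e T where "e \<in> E" "b = Poly_Mapping.single e 1 + expo n T"
      unfolding Cand_def by blast
    then show ?thesis
    proof cases
      case f then show ?thesis using keys_expo by simp
    next
      case s
      have "Poly_Mapping.keys b \<subseteq> Poly_Mapping.keys (Poly_Mapping.single e (1::nat)) \<union> Poly_Mapping.keys (expo n T)"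
        unfolding s(2) by (rule keys_add)
      then show ?thesis using keys_expo[of n T] s(1) En by auto
    qed
  qed
  have kA: "\<forall>b\<in>A. Poly_Mapping.keys b \<subseteq> {0..<n}" using AC candkeys by blast
  have le2: "Poly_Mapping.lookup b i \<le> 2" if "b \<in> A" for b i
  proof -
    from that AC consider (f) F where "b = expo n F" | (s) e T where "b = Poly_Mapping.single e 1 + expo n T"
      unfolding Cand_def by blast
    then show ?thesis
      by cases (auto simp: lookup_add lookup_expo lookup_single when_def)
  qed
  have cls: "(\<exists>F\<in>Wf. b = expo n F) \<or> (\<exists>e\<in>E. \<exists>T\<in>Tr. e \<notin> T \<and> b = Poly_Mapping.single e 1 + expo n T)"
    if "b \<in> A" for b
  proof -
    from that AC consider (f) F where "F \<in> Wf" "b = expo n F"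
      | (s) e T where "e \<in> E" "T \<in> Tr" "b = Poly_Mapping.single e 1 + expo n T"
      unfolding Cand_def by blast
    then show ?thesis
    proof cases
      case f then show ?thesis by blast
    next
      case s
      show ?thesis
      proof (cases "e \<in> T")
        case True
        have "T - {e} \<in> Wf" using tree_minus_edge[OF cg _ True] s(2) unfolding Wf_def Tr_def by blast
        moreover have "b = expo n (T - {e})"
        proof -
          have en: "e < n" using s(1) En by auto
          have Ts: "T \<subseteq> {0..<n}" using trees_sub s(2) unfolding Tr_def by blast
          then have "T - {e} \<subseteq> {0..<n}" by auto
          then have "Poly_Mapping.single e 1 + expo n T = expo n (T - {e}) \<longleftrightarrow> e \<notin> T - {e} \<and> T = insert e (T - {e})"
            by (rule single_expo_eq_expo[OF en Ts])
          then show ?thesis unfolding s(3) using True by (simp add: insert_absorb)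
        qed
        ultimately show ?thesis by blast
      next
        case False then show ?thesis using s by blast
      qed
    qed
  qed
  have KA: "Poly_Mapping.keys f \<subseteq> A" if "f \<in> K" for f
    using that unfolding A_def K_def generic_support_def by blast
  show ?thesis unfolding K_def[symmetric] A_def[symmetric]
  proof
    assume "K \<inter> interior_in A (nonneg_cone n A) \<noteq> {}"
    then obtain z m where fint: "symanzik_F V ends n L E z m \<in> interior_in A (nonneg_cone n A)"
      unfolding K_def kinematic_space_def by blast
    define f where "f = symanzik_F V ends n L E z m"
    define N where "N = {e\<in>E. \<exists>T\<in>Tr. e \<notin> T}"
    define KK where "KK = 2 * real n + 3"
    have mpos: "m e > 0" if eN: "e \<in> N" for e
    proof -
      obtain T where T: "T \<in> Tr" "e \<notin> T" and eE: "e \<in> E" using eN unfolding N_def by blast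
      have en: "e < n" using eE En by auto
      have Ts: "T \<subseteq> {0..<n}" using trees_sub T(1) unfolding Tr_def by blast
      define a where "a = Poly_Mapping.single e 1 + expo n T"
      have la: "Poly_Mapping.lookup a i = (if e = i then 1 else 0) + (if i < n \<and> i \<notin> T then 1 else 0)" for i
        unfolding a_def by (simp add: lookup_add lookup_expo lookup_single when_def)
      have aA: "a \<in> A"
      proof -
        have "Poly_Mapping.lookup (symanzik_F V ends n L E 0 (\<lambda>e'. if e' = e then 1 else 0)) a = 1"
          unfolding a_def using coeff_square[of T V ends n e E L 0] T eE En unfolding Tr_def by simp
        then have "a \<in> Poly_Mapping.keys (symanzik_F V ends n L E 0 (\<lambda>e'. if e' = e then 1 else 0))"
          by (simp add: in_keys_iff)
        then show ?thesis unfolding A_def generic_support_def kinematic_space_def by blast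
      qed
      define w where "w = (\<lambda>i. if i \<in> T then - KK else if i \<in> {e} then 1 else (0::real))"
      have ipw: "ip n w b = - KK * (\<Sum>i\<in>T. real (Poly_Mapping.lookup b i)) + (\<Sum>i\<in>{e}. real (Poly_Mapping.lookup b i))" for b
        unfolding w_def by (rule ip_split) (use T(2) Ts en in auto)
      have ipa: "ip n w a = 2"
      proof -
        have "(\<Sum>i\<in>T. real (Poly_Mapping.lookup a i)) = 0" using T(2) by (intro sum.neutral) (auto simp: la)
        moreover have "Poly_Mapping.lookup a e = 2" using la[of e] T(2) en by simp
        ultimately show ?thesis unfolding ipw by simp
      qed
      have finT: "finite T" using Ts finite_subset by blast
      have sep: "\<forall>b\<in>A - {a}. ip n w b \<le> ip n w a - 1"
      proof
        fix b assume b: "b \<in> A - {a}"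
        have be2: "real (Poly_Mapping.lookup b e) \<le> 2" using le2[of b e] b by simp
        from sum_nat_real_zero_or_ge1[OF finT, of "Poly_Mapping.lookup b"]
        show "ip n w b \<le> ip n w a - 1"
        proof
          assume ge: "(\<Sum>i\<in>T. real (Poly_Mapping.lookup b i)) \<ge> 1"
          have "KK \<ge> 3" unfolding KK_def by simp
          then have "- KK * (\<Sum>i\<in>T. real (Poly_Mapping.lookup b i)) \<le> - KK" using ge
            by (simp add: mult_le_cancel_left1)
          moreover have "(\<Sum>i\<in>{e}. real (Poly_Mapping.lookup b i)) = real (Poly_Mapping.lookup b e)" by simp
          ultimately show ?thesis using ipw[of b] ipa be2 \<open>KK \<ge> 3\<close> by linarith
        next
          assume z: "\<forall>i\<in>T. Poly_Mapping.lookup b i = 0"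
          have "Poly_Mapping.lookup b e \<le> 1"
          proof -
            from cls[of b] b consider (f) F where "b = expo n F"
              | (s) e' T' where "e' \<in> E" "T' \<in> Tr" "e' \<notin> T'" "b = Poly_Mapping.single e' 1 + expo n T'"
              by blast
            then show ?thesis
            proof cases
              case f then show ?thesis by (simp add: lookup_expo)
            next
              case s
              have lb: "Poly_Mapping.lookup b i = (if e' = i then 1 else 0) + (if i < n \<and> i \<notin> T' then 1 else 0)" for i
                unfolding s(4) by (simp add: lookup_add lookup_expo lookup_single when_def)
              show ?thesis
              proof (cases "e' = e")
                case True
                have "T \<subseteq> T'"
                proof
                  fix i assume i: "i \<in> T"
                  then have "i < n" using Ts by auto
                  then show "i \<in> T'" using z i lb[of i] by (auto split: if_splits)
                qed
                then have "T = T'" using tree_sub[OF cg] T(1) s(2) unfolding Tr_def by blast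
                then have "b = a" unfolding s(4) a_def True by simp
                then show ?thesis using b by simp
              next
                case False
                then show ?thesis using lb[of e] by simp
              qed
            qed
          qed
          moreover have "(\<Sum>i\<in>T. real (Poly_Mapping.lookup b i)) = 0" using z by simp
          moreover have "(\<Sum>i\<in>{e}. real (Poly_Mapping.lookup b i)) = real (Poly_Mapping.lookup b e)" by simp
          ultimately show ?thesis using ipw[of b] ipa by simp
        qed
      qed
      have "Poly_Mapping.lookup f a > 0" unfolding f_def by (rule interior_pos[OF fint finA aA kA sep])
      moreover have "Poly_Mapping.lookup f a = m e"
        unfolding f_def a_def using coeff_square[of T V ends n e E L z m] T eE En unfolding Tr_def by simp
      ultimately show ?thesis by simp
    qed
    have cpos: "Poly_Mapping.lookup f (expo n F) > 0"
      if F: "F \<in> Wf" and aA: "expo n F \<in> A" and noN: "\<forall>e\<in>E. e \<in> {j. j < n \<and> j \<notin> F \<and> insert j F \<in> Tr} \<longrightarrow> e \<notin> N"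
      for F
    proof -
      define J where "J = {j. j < n \<and> j \<notin> F \<and> insert j F \<in> Tr}"
      define a where "a = expo n F"
      have Fs: "F \<subseteq> {0..<n}" using forests_sub F unfolding Wf_def by blast
      have Js: "J \<subseteq> {0..<n}" unfolding J_def by auto
      have FJ: "F \<inter> J = {}" unfolding J_def by auto
      have finF: "finite F" using Fs finite_subset by blast
      have finJ: "finite J" using Js finite_subset by blast
      have cardJ: "real (card J) \<le> real n" using card_mono[OF _ Js] by simp
      define w where "w = (\<lambda>i. if i \<in> F then - KK else if i \<in> J then 1 else (0::real))"
      have ipw: "ip n w b = - KK * (\<Sum>i\<in>F. real (Poly_Mapping.lookup b i)) + (\<Sum>i\<in>J. real (Poly_Mapping.lookup b i))" for b
        unfolding w_def by (rule ip_split[OF FJ Fs Js])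
      have ipa: "ip n w a = real (card J)"
      proof -
        have "(\<Sum>i\<in>F. real (Poly_Mapping.lookup a i)) = 0" by (intro sum.neutral) (auto simp: a_def lookup_expo)
        moreover have "(\<Sum>i\<in>J. real (Poly_Mapping.lookup a i)) = (\<Sum>i\<in>J. 1)"
          by (intro sum.cong refl) (auto simp: a_def lookup_expo J_def)
        ultimately show ?thesis using ipw[of a] by simp
      qed
      have sep: "\<forall>b\<in>A - {a}. ip n w b \<le> ip n w a - 1"
      proof
        fix b assume b: "b \<in> A - {a}"
        have sJ: "(\<Sum>i\<in>J. real (Poly_Mapping.lookup b i)) \<le> (\<Sum>i\<in>J. 2)"
          using le2 b by (intro sum_mono) auto
        from sum_nat_real_zero_or_ge1[OF finF, of "Poly_Mapping.lookup b"]
        show "ip n w b \<le> ip n w a - 1"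
        proof
          assume ge: "(\<Sum>i\<in>F. real (Poly_Mapping.lookup b i)) \<ge> 1"
          have "KK \<ge> 3" unfolding KK_def by simp
          then have "- KK * (\<Sum>i\<in>F. real (Poly_Mapping.lookup b i)) \<le> - KK" using ge
            by (simp add: mult_le_cancel_left1)
          moreover have "(\<Sum>i\<in>J. (2::real)) = 2 * real (card J)" by simp
          ultimately show ?thesis using ipw[of b] ipa sJ cardJ unfolding KK_def by linarith
        next
          assume z: "\<forall>i\<in>F. Poly_Mapping.lookup b i = 0"
          from cls[of b] b consider (f) F' where "F' \<in> Wf" "b = expo n F'"
            | (s) e T where "e \<in> E" "T \<in> Tr" "e \<notin> T" "b = Poly_Mapping.single e 1 + expo n T"
            by blast
          then show ?thesis
          proof cases
            case f
            have "F \<subseteq> F'"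
            proof
              fix i assume i: "i \<in> F"
              then have "i < n" using Fs by auto
              then show "i \<in> F'" using z i unfolding f(2) by (auto simp: lookup_expo split: if_splits)
            qed
            then have "F = F'" using forest2_sub[OF cg] F f(1) unfolding Wf_def by blast
            then have "b = a" unfolding f(2) a_def by simp
            then show ?thesis using b by simp
          next
            case s
            have lb: "Poly_Mapping.lookup b i = (if e = i then 1 else 0) + (if i < n \<and> i \<notin> T then 1 else 0)" for i
              unfolding s(4) by (simp add: lookup_add lookup_expo lookup_single when_def)
            have FT: "F \<subseteq> T"
            proof
              fix i assume i: "i \<in> F"
              then have "i < n" using Fs by auto
              then show "i \<in> T" using z i lb[of i] by (auto split: if_splits)
            qed
            obtain j where j: "j \<notin> F" "T = insert j F"
              using forest2_tree_sub[OF cg _ _ FT] F s(2) unfolding Wf_def Tr_def by blast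
            have Ts: "T \<subseteq> {0..<n}" using trees_sub s(2) unfolding Tr_def by blast
            have jJ: "j \<in> J" unfolding J_def using j s(2) Ts by auto
            have eN: "e \<in> N" unfolding N_def using s(1,2,3) by blast
            have eJ: "e \<notin> J" using noN s(1) eN unfolding J_def by blast
            have "(\<Sum>i\<in>J. real (Poly_Mapping.lookup b i)) = (\<Sum>i\<in>J - {j}. real (Poly_Mapping.lookup b i)) + real (Poly_Mapping.lookup b j)"
              using finJ jJ by (simp add: sum.remove)
            also have "Poly_Mapping.lookup b j = 0" using lb[of j] j eJ jJ by auto
            also have "(\<Sum>i\<in>J - {j}. real (Poly_Mapping.lookup b i)) \<le> (\<Sum>i\<in>J - {j}. 1)"
              using eJ by (intro sum_mono) (auto simp: lb)
            also have "(\<Sum>i\<in>J - {j}. (1::real)) = real (card J) - 1"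
            proof -
              have "card J \<ge> 1" using finJ jJ by (metis One_nat_def Suc_leI card_gt_0_iff empty_iff)
              then show ?thesis using finJ jJ by (simp add: card_Diff_singleton of_nat_diff)
            qed
            finally have "(\<Sum>i\<in>J. real (Poly_Mapping.lookup b i)) \<le> real (card J) - 1" by simp
            moreover have "(\<Sum>i\<in>F. real (Poly_Mapping.lookup b i)) = 0" using z by simp
            ultimately show ?thesis using ipw[of b] ipa by simp
          qed
        qed
      qed
      have "Poly_Mapping.lookup f a > 0" unfolding f_def by (rule interior_pos[OF fint finA _ kA sep]) (use aA a_def in simp)
      then show ?thesis unfolding a_def .
    qed
    define S where "S = (\<lambda>F. {e\<in>E. e \<notin> F \<and> insert e F \<in> Tr})"
    define c where "c = (\<lambda>F. Poly_Mapping.lookup f (expo n F))"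
    define sF where "sF = (\<lambda>F. \<Sum>e\<in>S F \<inter> N. m e)"
    define lam where "lam = 1 + (\<Sum>F\<in>Wf. \<bar>c F\<bar> / sF F)"
    define m' where "m' = (\<lambda>e. if e \<in> N then (1 + lam) * m e else m e)"
    have finS: "finite (S F)" for F unfolding S_def using finE by simp
    have sF0: "sF F \<ge> 0" for F unfolding sF_def using mpos by (intro sum_nonneg) (auto intro: less_imp_le)
    have lam1: "lam \<ge> 1 + \<bar>c F\<bar> / sF F" if "F \<in> Wf" for F
    proof -
      have "\<bar>c F\<bar> / sF F \<le> (\<Sum>F\<in>Wf. \<bar>c F\<bar> / sF F)"
        using that finite_forests[of V ends n] sF0 unfolding Wf_def
        by (intro member_le_sum) (auto intro: divide_nonneg_nonneg)
      then show ?thesis unfolding lam_def by simp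
    qed
    have lam0: "lam \<ge> 0"
      unfolding lam_def using sF0 by (smt (verit) divide_nonneg_nonneg abs_ge_zero sum_nonneg)
    have cf: "Poly_Mapping.lookup (symanzik_F V ends n L E z mm) (expo n F) = L F z + (\<Sum>e\<in>S F. mm e)"
      if "F \<in> Wf" for F mm
      unfolding S_def Tr_def using coeff_forest[of F V ends n E L z mm] that En unfolding Wf_def by simp
    have sm': "(\<Sum>e\<in>S F. m' e) = (\<Sum>e\<in>S F. m e) + lam * sF F" for F
    proof -
      have "(\<Sum>e\<in>S F. m' e) = (\<Sum>e\<in>S F. m e + (if e \<in> N then lam * m e else 0))"
        unfolding m'_def by (intro sum.cong refl) (simp add: algebra_simps)
      also have "\<dots> = (\<Sum>e\<in>S F. m e) + (\<Sum>e\<in>S F \<inter> N. lam * m e)"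
        by (simp add: sum.distrib sum.inter_restrict[OF finS])
      finally show ?thesis unfolding sF_def by (simp add: sum_distrib_left)
    qed
    show "\<exists>f\<in>K. \<forall>a\<in>A. Poly_Mapping.lookup f a > 0"
    proof (intro bexI ballI)
      show "symanzik_F V ends n L E z m' \<in> K" unfolding K_def kinematic_space_def by blast
      fix a assume aA: "a \<in> A"
      from cls[OF aA] consider (f) F where "F \<in> Wf" "a = expo n F"
        | (s) e T where "e \<in> E" "T \<in> Tr" "e \<notin> T" "a = Poly_Mapping.single e 1 + expo n T"
        by blast
      then show "Poly_Mapping.lookup (symanzik_F V ends n L E z m') a > 0"
      proof cases
        case s
        have eN: "e \<in> N" unfolding N_def using s by blast
        have "Poly_Mapping.lookup (symanzik_F V ends n L E z m') a = m' e"
          unfolding s(4) using coeff_square[of T V ends n e E L z m'] s En unfolding Tr_def by simp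
        also have "\<dots> = (1 + lam) * m e" unfolding m'_def using eN by simp
        finally show ?thesis using mpos[OF eN] lam0 by simp
      next
        case f
        have eq: "Poly_Mapping.lookup (symanzik_F V ends n L E z m') a = c F + lam * sF F"
          unfolding f(2) c_def f_def cf[OF f(1)] sm' by simp
        show ?thesis
        proof (cases "S F \<inter> N = {}")
          case True
          have "c F > 0" unfolding c_def
          proof (rule cpos[OF f(1)])
            show "expo n F \<in> A" using aA f(2) by simp
            show "\<forall>e\<in>E. e \<in> {j. j < n \<and> j \<notin> F \<and> insert j F \<in> Tr} \<longrightarrow> e \<notin> N"
              using True unfolding S_def by blast
          qed
          moreover have "sF F = 0" unfolding sF_def True by simp
          ultimately show ?thesis using eq by simp
        next
          case False
          then obtain e where e: "e \<in> S F \<inter> N" by blast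
          have "sF F \<ge> m e" unfolding sF_def using e finS[of F] mpos
            by (intro member_le_sum) (auto intro: less_imp_le)
          then have sp: "sF F > 0" using mpos e by force
          have "lam * sF F \<ge> (1 + \<bar>c F\<bar> / sF F) * sF F" using lam1[OF f(1)] sp by (simp add: mult_right_mono)
          also have "(1 + \<bar>c F\<bar> / sF F) * sF F = sF F + \<bar>c F\<bar>" using sp by (simp add: field_simps)
          finally show ?thesis using eq sp by linarith
        qed
      qed
    qed
  next
    assume "\<exists>f\<in>K. \<forall>a\<in>A. Poly_Mapping.lookup f a > 0"
    then obtain f where fK: "f \<in> K" and fpos: "\<forall>a\<in>A. Poly_Mapping.lookup f a > 0" by blast
    have kf: "Poly_Mapping.keys f \<subseteq> A" using KA[OF fK] .
    define eps where "eps = (if A = {} then 1 else Min (Poly_Mapping.lookup f ` A))"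
    have eps0: "eps > 0" unfolding eps_def using finA fpos by auto
    have epsle: "eps \<le> Poly_Mapping.lookup f b" if "b \<in> A" for b
      unfolding eps_def using finA that by auto
    have "f \<in> nonneg_cone n A" using posC[OF kf kA] fpos by (simp add: less_imp_le)
    moreover have "h \<in> nonneg_cone n A"
      if h: "h \<in> poly_space A" "\<forall>b\<in>A. \<bar>Poly_Mapping.lookup h b - Poly_Mapping.lookup f b\<bar> < eps" for h
    proof (rule posC[OF _ kA])
      show "Poly_Mapping.keys h \<subseteq> A" using h(1) unfolding poly_space_def by simp
      show "\<forall>b\<in>A. 0 \<le> Poly_Mapping.lookup h b"
      proof
        fix b assume b: "b \<in> A"
        show "0 \<le> Poly_Mapping.lookup h b" using h(2) b epsle[OF b] by force
      qed
    qed
    ultimately have "f \<in> interior_in A (nonneg_cone n A)"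
      unfolding interior_in_def using eps0 by blast
    then show "K \<inter> interior_in A (nonneg_cone n A) \<noteq> {}" using fK by blast
  qed
qed


end
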